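(* Let $m>n$ be positive integers and let $G[V_1,V_2]$ be a balanced bipartite graph on $2(m+n-1)$ vertices (so $|V_1|=|V_2|=m+n-1$) with minimum degree $\delta(G)>\frac{3}{4}(m+n-1)$. Suppose a red-blue coloring of the edges of $G$ has no red connected $m$-matching. Then there is a connected component $C$ of the blue subgraph with $|V(C)\cap V_1|\ge n$ and $|V(C)\cap V_2|\ge n$.
   Context: For a red-blue edge coloring of $G$, the red subgraph (resp. blue subgraph) is the spanning subgraph of $G$ consisting of all red (resp. blue) edges; a red (blue) component is a connected component of it. A connected $k$-matching in a graph $H$ is a matching with $k$ edges all lying in a single connected component of $H$; a red connected $k$-matching is a connected $k$-matching in the red subgraph. *)

theory Defs
  imports Complex_Main
begin

definition balanced_bipartite_graph :: "'a set \<Rightarrow> 'a set \<Rightarrow> ('a \<Rightarrow> 'a \<Rightarrow> bool) \<Rightarrow> bool" where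
  "balanced_bipartite_graph V1 V2 E \<longleftrightarrow>
     finite V1 \<and> finite V2 \<and> V1 \<inter> V2 = {} \<and> card V1 = card V2 \<and>
     (\<forall>u v. E u v \<longrightarrow> E v u) \<and>
     (\<forall>u v. E u v \<longrightarrow> (u \<in> V1 \<and> v \<in> V2) \<or> (u \<in> V2 \<and> v \<in> V1))"

definition degree :: "'a set \<Rightarrow> ('a \<Rightarrow> 'a \<Rightarrow> bool) \<Rightarrow> 'a \<Rightarrow> nat" where
  "degree V E u = card {v \<in> V. E u v}"

text \<open>A red-blue colouring: the red edges R form a symmetric subrelation of E;
  the remaining edges of E are blue.\<close>
definition red_blue_coloring :: "('a \<Rightarrow> 'a \<Rightarrow> bool) \<Rightarrow> ('a \<Rightarrow> 'a \<Rightarrow> bool) \<Rightarrow> bool" where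
  "red_blue_coloring E R \<longleftrightarrow> (\<forall>u v. R u v \<longrightarrow> E u v) \<and> (\<forall>u v. R u v \<longrightarrow> R v u)"

definition blue_edges :: "('a \<Rightarrow> 'a \<Rightarrow> bool) \<Rightarrow> ('a \<Rightarrow> 'a \<Rightarrow> bool) \<Rightarrow> 'a \<Rightarrow> 'a \<Rightarrow> bool" where
  "blue_edges E R u v \<longleftrightarrow> E u v \<and> \<not> R u v"

definition is_component :: "'a set \<Rightarrow> ('a \<Rightarrow> 'a \<Rightarrow> bool) \<Rightarrow> 'a set \<Rightarrow> bool" where
  "is_component V H C \<longleftrightarrow> (\<exists>x\<in>V. C = {y \<in> V. (\<lambda>a b. a \<in> V \<and> b \<in> V \<and> H a b)\<^sup>*\<^sup>* x y})"

definition is_matching :: "('a \<Rightarrow> 'a \<Rightarrow> bool) \<Rightarrow> 'a set set \<Rightarrow> bool" where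
  "is_matching H M \<longleftrightarrow> (\<forall>e\<in>M. \<exists>u v. e = {u, v} \<and> u \<noteq> v \<and> H u v) \<and>
     (\<forall>e\<in>M. \<forall>f\<in>M. e \<noteq> f \<longrightarrow> e \<inter> f = {})"

definition connected_k_matching :: "'a set \<Rightarrow> ('a \<Rightarrow> 'a \<Rightarrow> bool) \<Rightarrow> nat \<Rightarrow> 'a set set \<Rightarrow> bool" where
  "connected_k_matching V H k M \<longleftrightarrow> is_matching H M \<and> finite M \<and> card M = k \<and>
     (\<exists>C. is_component V H C \<and> (\<forall>e\<in>M. e \<subseteq> C))"

end

theory Submission
  imports Defs
begin

definition conn :: "'a set \<Rightarrow> ('a \<Rightarrow> 'a \<Rightarrow> bool) \<Rightarrow> 'a \<Rightarrow> 'a \<Rightarrow> bool" where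
  "conn V H = (\<lambda>a b. a \<in> V \<and> b \<in> V \<and> H a b)\<^sup>*\<^sup>*"

definition good :: "'a set \<Rightarrow> 'a set \<Rightarrow> 'a set \<Rightarrow> ('a \<Rightarrow> 'a \<Rightarrow> bool) \<Rightarrow> ('a \<Rightarrow> 'a \<Rightarrow> bool) \<Rightarrow> nat \<Rightarrow> bool" where
  "good V V1 V2 E R n \<longleftrightarrow> (\<exists>x\<in>V. n \<le> card ({y\<in>V. conn V (blue_edges E R) x y} \<inter> V1) \<and>
      n \<le> card ({y\<in>V. conn V (blue_edges E R) x y} \<inter> V2))"

lemma good_swap: "good V V2 V1 E R n = good V V1 V2 E R n"
  unfolding good_def by blast

lemma conn_refl: "conn V H x x" unfolding conn_def by simp

lemma conn_edge: "a \<in> V \<Longrightarrow> b \<in> V \<Longrightarrow> H a b \<Longrightarrow> conn V H a b"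
  unfolding conn_def by (rule r_into_rtranclp) simp

lemma conn_trans: "conn V H a b \<Longrightarrow> conn V H b c \<Longrightarrow> conn V H a c"
  unfolding conn_def by (rule rtranclp_trans)

lemma conn_sym:
  assumes "\<And>a b. H a b \<Longrightarrow> H b a" and "conn V H a b" shows "conn V H b a"
  using assms(2) unfolding conn_def
proof (induction rule: rtranclp_induct)
  case base then show ?case by simp
next
  case (step y z)
  have "(\<lambda>a b. a \<in> V \<and> b \<in> V \<and> H a b) z y" using step(2) assms(1) by blast
  then show ?case using step(3) by (rule converse_rtranclp_into_rtranclp)
qed

lemma inj_ins: assumes "inj_on f A" "f a \<notin> f ` A" shows "inj_on f (insert a A)"
proof (cases "a \<in> A")
  case True then show ?thesis using assms by (simp add: insert_absorb)
next
  case False then show ?thesis using assms by simp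
qed

lemma aug2:
  assumes i1: "inj_on fst M" and i2: "inj_on snd M" and p: "(x,y) \<in> M"
    and u: "u \<notin> fst ` M" and w: "w \<notin> snd ` M" and f: "finite M"
  shows "inj_on fst (insert (u,y) (insert (x,w) (M - {(x,y)})))"
    and "inj_on snd (insert (u,y) (insert (x,w) (M - {(x,y)})))"
    and "card (insert (u,y) (insert (x,w) (M - {(x,y)}))) = Suc (card M)"
proof -
  have ux: "u \<noteq> x" using u p by (metis fst_conv image_eqI)
  have yw: "y \<noteq> w" using w p by (metis snd_conv image_eqI)
  have nx: "x \<notin> fst ` (M - {(x,y)})"
  proof
    assume "x \<in> fst ` (M - {(x,y)})"
    then obtain q where "q \<in> M" "q \<noteq> (x,y)" "fst q = x" by auto
    then show False using i1 p by (metis fst_conv inj_onD)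
  qed
  have ny: "y \<notin> snd ` (M - {(x,y)})"
  proof
    assume "y \<in> snd ` (M - {(x,y)})"
    then obtain q where "q \<in> M" "q \<noteq> (x,y)" "snd q = y" by auto
    then show False using i2 p by (metis snd_conv inj_onD)
  qed
  have i1': "inj_on fst (M - {(x,y)})" using i1 by (rule inj_on_subset) auto
  have i2': "inj_on snd (M - {(x,y)})" using i2 by (rule inj_on_subset) auto
  have un: "u \<notin> fst ` (M - {(x,y)})" using u by blast
  have wn: "w \<notin> snd ` (M - {(x,y)})" using w by blast
  have j1: "inj_on fst (insert (x,w) (M - {(x,y)}))"
    apply (rule inj_ins[OF i1']) using nx by simp
  have j2: "inj_on snd (insert (x,w) (M - {(x,y)}))"
    apply (rule inj_ins[OF i2']) using wn by simp
  show "inj_on fst (insert (u,y) (insert (x,w) (M - {(x,y)})))"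
    apply (rule inj_ins[OF j1]) using un ux by simp
  show "inj_on snd (insert (u,y) (insert (x,w) (M - {(x,y)})))"
    apply (rule inj_ins[OF j2]) using ny yw by simp
  have a: "(x,w) \<notin> M - {(x,y)}" using nx by (metis fst_conv image_eqI)
  have b: "(u,y) \<notin> insert (x,w) (M - {(x,y)})" using ux un by (metis fst_conv image_eqI insertE prod.inject)
  have c: "card (M - {(x,y)}) = card M - 1" using p f by simp
  have d: "card M \<ge> 1" using p f by (metis One_nat_def Suc_leI card_gt_0_iff empty_iff)
  have e1: "card (insert (x,w) (M - {(x,y)})) = Suc (card (M - {(x,y)}))"
    using a f by (intro card_insert_disjoint) auto
  have e2: "card (insert (u,y) (insert (x,w) (M - {(x,y)}))) = Suc (card (insert (x,w) (M - {(x,y)})))"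
    using b f by (intro card_insert_disjoint) auto
  show "card (insert (u,y) (insert (x,w) (M - {(x,y)}))) = Suc (card M)"
    using c d e1 e2 by simp
qed

locale bsetup =
  fixes V V1 V2 :: "'a set" and E R :: "'a \<Rightarrow> 'a \<Rightarrow> bool" and m n :: nat
  assumes VU: "V = V1 \<union> V2"
    and fin1: "finite V1" and fin2: "finite V2" and disj: "V1 \<inter> V2 = {}"
    and c1: "card V1 = m + n - 1" and c2: "card V2 = m + n - 1"
    and npos: "0 < n" and nm: "n < m"
    and Esym: "\<And>u v. E u v \<Longrightarrow> E v u"
    and Ebip: "\<And>u v. E u v \<Longrightarrow> (u \<in> V1 \<and> v \<in> V2) \<or> (u \<in> V2 \<and> v \<in> V1)"
    and deg: "\<And>u. u \<in> V \<Longrightarrow> 3 * (m + n - 1) < 4 * card {v \<in> V. E u v}"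
    and RE: "\<And>u v. R u v \<Longrightarrow> E u v" and Rsym: "\<And>u v. R u v \<Longrightarrow> R v u"
    and nomatch: "\<not> (\<exists>M. connected_k_matching V R m M)"

lemma (in bsetup) swap: "bsetup V V2 V1 E R m n"
proof unfold_locales
  show "V = V2 \<union> V1" using VU by blast
  show "finite V2" "finite V1" "V2 \<inter> V1 = {}" "card V2 = m + n - 1" "card V1 = m + n - 1" "0 < n" "n < m"
    using fin1 fin2 disj c1 c2 npos nm by auto
  show "\<And>u v. E u v \<Longrightarrow> E v u" by (rule Esym)
  show "\<And>u v. E u v \<Longrightarrow> u \<in> V2 \<and> v \<in> V1 \<or> u \<in> V1 \<and> v \<in> V2" using Ebip by blast
  show "\<And>u. u \<in> V \<Longrightarrow> 3 * (m + n - 1) < 4 * card {v \<in> V. E u v}" by (rule deg)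
  show "\<And>u v. R u v \<Longrightarrow> E u v" by (rule RE)
  show "\<And>u v. R u v \<Longrightarrow> R v u" by (rule Rsym)
  show "\<nexists>M. connected_k_matching V R m M" by (rule nomatch)
qed

sublocale bsetup \<subseteq> sw: bsetup V V2 V1 E R m n by (rule swap)

context bsetup begin

abbreviation "N \<equiv> m + n - 1"
abbreviation "rc \<equiv> conn V R"
abbreviation "bc \<equiv> conn V (blue_edges E R)"
abbreviation "nb v \<equiv> {w\<in>V. E v w}"

lemma twon: "2 * n \<le> N" using nm by simp

lemma finV: "finite V" using VU fin1 fin2 by simp

lemma nb_sub: "v \<in> V1 \<Longrightarrow> nb v \<subseteq> V2"
  using Ebip disj by blast

lemma nb_card: "v \<in> V1 \<Longrightarrow> 3 * N < 4 * card (nb v)"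
  using deg VU by blast

lemma nb_le: "v \<in> V1 \<Longrightarrow> card (nb v) \<le> N"
  using nb_sub c2 fin2 card_mono by metis

lemma F1:
  assumes v: "v \<in> V1" and A: "A \<subseteq> V2"
  shows "4 * card A < 4 * card (A \<inter> nb v) + N"
proof -
  have "A \<subseteq> (A \<inter> nb v) \<union> (V2 - nb v)" using A by blast
  then have "card A \<le> card ((A \<inter> nb v) \<union> (V2 - nb v))"
    using fin2 A by (intro card_mono) (auto intro: finite_subset[OF _ fin2])
  also have "\<dots> \<le> card (A \<inter> nb v) + card (V2 - nb v)" by (rule card_Un_le)
  also have "card (V2 - nb v) = N - card (nb v)"
    using card_Diff_subset[OF finite_subset[OF nb_sub[OF v] fin2] nb_sub[OF v]] c2 by simp
  finally have "card A \<le> card (A \<inter> nb v) + (N - card (nb v))" .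
  then show ?thesis using nb_card[OF v] nb_le[OF v] by linarith
qed

lemma F2:
  assumes v: "v \<in> V1" and v': "v' \<in> V1" and A: "A \<subseteq> V2"
  shows "2 * card A < 2 * card (A \<inter> nb v \<inter> nb v') + N"
proof -
  have "A \<subseteq> (A \<inter> nb v \<inter> nb v') \<union> (V2 - nb v) \<union> (V2 - nb v')" using A by blast
  then have "card A \<le> card ((A \<inter> nb v \<inter> nb v') \<union> (V2 - nb v) \<union> (V2 - nb v'))"
    using fin2 A by (intro card_mono) (auto intro: finite_subset[OF _ fin2])
  also have "\<dots> \<le> card (A \<inter> nb v \<inter> nb v') + card (V2 - nb v) + card (V2 - nb v')"
    by (meson add_le_mono card_Un_le dual_order.trans le_refl)
  also have "card (V2 - nb v) = N - card (nb v)"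
    using card_Diff_subset[OF finite_subset[OF nb_sub[OF v] fin2] nb_sub[OF v]] c2 by simp
  also have "card (V2 - nb v') = N - card (nb v')"
    using card_Diff_subset[OF finite_subset[OF nb_sub[OF v'] fin2] nb_sub[OF v']] c2 by simp
  finally have "card A \<le> card (A \<inter> nb v \<inter> nb v') + (N - card (nb v)) + (N - card (nb v'))" .
  then show ?thesis using nb_card[OF v] nb_le[OF v] nb_card[OF v'] nb_le[OF v'] by linarith
qed

end
context bsetup begin
lemma neq12: "a \<in> V1 \<Longrightarrow> b \<in> V2 \<Longrightarrow> a \<noteq> b" using disj by auto

lemma E_V: "E a b \<Longrightarrow> a \<in> V \<and> b \<in> V" using Ebip VU by blast

lemma rc_sym: "rc a b \<Longrightarrow> rc b a" by (rule conn_sym[OF Rsym])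

lemma blue_sym: "blue_edges E R a b \<Longrightarrow> blue_edges E R b a"
  unfolding blue_edges_def using Esym Rsym by blast

lemma bc_sym: "bc a b \<Longrightarrow> bc b a" by (rule conn_sym[OF blue_sym])

lemma rc_trans: "rc a b \<Longrightarrow> rc b c \<Longrightarrow> rc a c" by (rule conn_trans)
lemma bc_trans: "bc a b \<Longrightarrow> bc b c \<Longrightarrow> bc a c" by (rule conn_trans)

lemma red_rc: "R a b \<Longrightarrow> rc a b"
  using E_V[OF RE] by (intro conn_edge) auto

lemma blue_bc: "E a b \<Longrightarrow> \<not> R a b \<Longrightarrow> bc a b"
  using E_V by (intro conn_edge) (auto simp: blue_edges_def)

lemma LemX_sub:
  assumes "bc x v" "bc x v'" "\<not> rc v v'"
  shows "nb v \<inter> nb v' \<subseteq> {y\<in>V. bc x y}"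
proof
  fix z assume z: "z \<in> nb v \<inter> nb v'"
  then have e: "E v z" "E v' z" "z \<in> V" by auto
  show "z \<in> {y\<in>V. bc x y}"
  proof (cases "R v z")
    case True
    show ?thesis
    proof (cases "R v' z")
      case True
      then have "rc v z" "rc v' z" using \<open>R v z\<close> red_rc by auto
      then have "rc v v'" using rc_sym rc_trans by blast
      then show ?thesis using assms by blast
    next
      case False
      then show ?thesis using e assms(2) blue_bc bc_trans by blast
    qed
  next
    case False
    then show ?thesis using e assms(1) blue_bc bc_trans by blast
  qed
qed

lemma LemX:
  assumes "v \<in> V1" "v' \<in> V1" "bc x v" "bc x v'" "\<not> rc v v'"
  shows "N < 2 * card ({y\<in>V. bc x y} \<inter> V2)"
proof -
  have "2 * card V2 < 2 * card (V2 \<inter> nb v \<inter> nb v') + N" using F2[OF assms(1,2)] by simp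
  moreover have "V2 \<inter> nb v \<inter> nb v' \<subseteq> {y\<in>V. bc x y} \<inter> V2"
    using LemX_sub[OF assms(3-5)] by blast
  then have "card (V2 \<inter> nb v \<inter> nb v') \<le> card ({y\<in>V. bc x y} \<inter> V2)"
    by (intro card_mono) (auto intro: finite_subset[OF _ fin2])
  ultimately show ?thesis using c2 by linarith
qed

lemma BL:
  assumes A: "A \<subseteq> V1" and B: "B \<subseteq> V2"
    and noR: "\<forall>a\<in>A. \<forall>b\<in>B. E a b \<longrightarrow> \<not> R a b"
    and cA: "N \<le> 2 * card A" and cB: "n \<le> card B"
  shows "good V V1 V2 E R n"
proof -
  have finB: "finite B" using B fin2 finite_subset by blast
  have finA: "finite A" using A fin1 finite_subset by blast
  have "B \<noteq> {}" using cB npos by auto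
  then obtain b0 where b0: "b0 \<in> B" by blast
  have b0V: "b0 \<in> V" using b0 B VU by blast
  define D where "D = {y\<in>V. bc b0 y}"
  have Bsub: "B \<subseteq> D \<inter> V2"
  proof
    fix b assume b: "b \<in> B"
    have "2 * card A < 2 * card (A \<inter> nb b0 \<inter> nb b) + N"
      using sw.F2[of b0 b A] b0 b A B by blast
    then have "A \<inter> nb b0 \<inter> nb b \<noteq> {}" using cA by auto
    then obtain a where a: "a \<in> A" "E b0 a" "E b a" by blast
    then have "bc a b0" "bc a b" using noR b0 b blue_bc Esym by blast+
    then have "bc b0 b" using bc_sym bc_trans by blast
    then show "b \<in> D \<inter> V2" using b B VU D_def by blast
  qed
  have c2': "n \<le> card (D \<inter> V2)"
    using cB card_mono[OF _ Bsub] fin2 by (meson finite_Int le_trans)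
  have c1': "n \<le> card (D \<inter> V1)"
  proof (cases "N < 4 * card B")
    case True
    have "A \<subseteq> D \<inter> V1"
    proof
      fix a assume a: "a \<in> A"
      have "4 * card B < 4 * card (B \<inter> nb a) + N" using F1[of a B] a A B by blast
      then have "B \<inter> nb a \<noteq> {}" using True by auto
      then obtain b where b: "b \<in> B" "E a b" by blast
      then have "bc a b" using noR a blue_bc by blast
      moreover have "bc b0 b" using Bsub b D_def by blast
      ultimately have "bc b0 a" using bc_sym bc_trans by blast
      then show "a \<in> D \<inter> V1" using a A VU D_def by blast
    qed
    then have "card A \<le> card (D \<inter> V1)" using fin1 by (intro card_mono) auto
    then show ?thesis using cA twon by linarith
  next
    case False
    have "4 * card A < 4 * card (A \<inter> nb b0) + N" using sw.F1[of b0 A] b0 A B by blast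
    moreover have "A \<inter> nb b0 \<subseteq> D \<inter> V1"
    proof
      fix a assume a: "a \<in> A \<inter> nb b0"
      then have "bc a b0" using noR b0 blue_bc Esym by blast
      then show "a \<in> D \<inter> V1" using a A D_def bc_sym by blast
    qed
    then have "card (A \<inter> nb b0) \<le> card (D \<inter> V1)" using fin1 by (intro card_mono) auto
    ultimately show ?thesis using cA cB False by linarith
  qed
  show ?thesis unfolding good_def using b0V c1' c2' D_def by blast
qed

lemma pm_matching:
  assumes k: "k \<in> V" and M: "M \<subseteq> ({y\<in>V. rc k y} \<inter> V1) \<times> ({y\<in>V. rc k y} \<inter> V2)"
    and Mr: "\<forall>p\<in>M. R (fst p) (snd p)" and i1: "inj_on fst M" and i2: "inj_on snd M"
  shows "connected_k_matching V R (card M) ((\<lambda>p. {fst p, snd p}) ` M)"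
proof -
  have finM: "finite M" using M fin1 fin2 by (meson finite_Int finite_SigmaI finite_subset)
  have inV: "\<And>p. p \<in> M \<Longrightarrow> fst p \<in> V1 \<and> snd p \<in> V2" using M by auto
  have m1: "\<forall>e\<in>(\<lambda>p. {fst p, snd p}) ` M. \<exists>u v. e = {u, v} \<and> u \<noteq> v \<and> R u v"
  proof
    fix e assume "e \<in> (\<lambda>p. {fst p, snd p}) ` M"
    then obtain p where p: "p \<in> M" "e = {fst p, snd p}" by blast
    have "fst p \<noteq> snd p" using inV[OF p(1)] disj by auto
    then show "\<exists>u v. e = {u, v} \<and> u \<noteq> v \<and> R u v" using p Mr
      by (intro exI[of _ "fst p"] exI[of _ "snd p"]) simp
  qed
  have m2: "\<forall>e\<in>(\<lambda>p. {fst p, snd p}) ` M. \<forall>f\<in>(\<lambda>p. {fst p, snd p}) ` M. e \<noteq> f \<longrightarrow> e \<inter> f = {}"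
  proof (intro ballI impI)
    fix e f assume e: "e \<in> (\<lambda>p. {fst p, snd p}) ` M" and f: "f \<in> (\<lambda>p. {fst p, snd p}) ` M"
      and ef: "e \<noteq> f"
    obtain p where p: "p \<in> M" "e = {fst p, snd p}" using e by blast
    obtain q where q: "q \<in> M" "f = {fst q, snd q}" using f by blast
    have "p \<noteq> q" using p q ef by blast
    then have n1: "fst p \<noteq> fst q" using inj_onD[OF i1 _ p(1) q(1)] by blast
    have n2: "snd p \<noteq> snd q" using inj_onD[OF i2 _ p(1) q(1)] \<open>p \<noteq> q\<close> by blast
    have n3: "fst p \<noteq> snd q" "snd p \<noteq> fst q" using inV[OF p(1)] inV[OF q(1)] neq12 by metis+
    show "e \<inter> f = {}" unfolding p(2) q(2) using n1 n2 n3 by auto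
  qed
  have inj: "inj_on (\<lambda>p. {fst p, snd p}) M"
  proof (rule inj_onI)
    fix p q assume p: "p \<in> M" and q: "q \<in> M" and eq: "{fst p, snd p} = {fst q, snd q}"
    have "fst p \<noteq> snd q" "snd p \<noteq> fst q" using inV[OF p] inV[OF q] neq12 by metis+
    then have "fst p = fst q \<and> snd p = snd q" using eq unfolding doubleton_eq_iff by blast
    then show "p = q" by (simp add: prod_eq_iff)
  qed
  have comp: "is_component V R {y\<in>V. rc k y}"
    unfolding is_component_def conn_def by (rule bexI[OF refl k])
  have sub: "\<forall>e\<in>(\<lambda>p. {fst p, snd p}) ` M. e \<subseteq> {y\<in>V. rc k y}"
  proof
    fix e assume "e \<in> (\<lambda>p. {fst p, snd p}) ` M"
    then obtain p where "p \<in> M" "e = {fst p, snd p}" by blast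
    then show "e \<subseteq> {y\<in>V. rc k y}" using M by (cases p) auto
  qed
  have im: "is_matching R ((\<lambda>p. {fst p, snd p}) ` M)" unfolding is_matching_def using m1 m2 by (rule conjI)
  have fi: "finite ((\<lambda>p. {fst p, snd p}) ` M)" using finM by (rule finite_imageI)
  have ex: "\<exists>C. is_component V R C \<and> (\<forall>e\<in>(\<lambda>p. {fst p, snd p}) ` M. e \<subseteq> C)"
    using comp sub by blast
  show ?thesis unfolding connected_k_matching_def
    using im fi card_image[OF inj] ex by blast
qed

lemma ore_data:
  assumes k: "k \<in> V"
  defines "K \<equiv> {y\<in>V. rc k y}"
  shows "\<exists>s U X W Y. s < m \<and> U \<subseteq> K \<inter> V1 \<and> X \<subseteq> K \<inter> V1 \<and> U \<inter> X = {} \<and>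
    W \<subseteq> K \<inter> V2 \<and> Y \<subseteq> K \<inter> V2 \<and> W \<inter> Y = {} \<and>
    card (K \<inter> V1) \<le> card U + s \<and> card (K \<inter> V2) \<le> card W + s \<and> s \<le> card X + card Y \<and>
    (\<forall>u\<in>U. \<forall>w\<in>W. \<not> R u w) \<and> (\<forall>u\<in>U. \<forall>y\<in>Y. \<not> R u y) \<and> (\<forall>x\<in>X. \<forall>w\<in>W. \<not> R x w)"
proof -
  define K1 where "K1 = K \<inter> V1"
  define K2 where "K2 = K \<inter> V2"
  have fK1: "finite K1" using fin1 K1_def by simp
  have fK2: "finite K2" using fin2 K2_def by simp
  define PM where "PM = {M. M \<subseteq> K1 \<times> K2 \<and> (\<forall>p\<in>M. R (fst p) (snd p)) \<and> inj_on fst M \<and> inj_on snd M}"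
  have finPM: "finite PM"
  proof -
    have "PM \<subseteq> Pow (K1 \<times> K2)" unfolding PM_def by blast
    then show ?thesis using fK1 fK2 by (meson finite_Pow_iff finite_SigmaI finite_subset)
  qed
  have "{} \<in> PM" unfolding PM_def by simp
  then have ne: "card ` PM \<noteq> {}" by blast
  obtain M where MPM: "M \<in> PM" and Mc: "card M = Max (card ` PM)"
    using Max_in[OF finite_imageI[OF finPM] ne] by auto
  have Mmax: "\<And>M'. M' \<in> PM \<Longrightarrow> card M' \<le> card M"
    using Mc finPM by simp
  have Msub: "M \<subseteq> K1 \<times> K2" and Mr: "\<forall>p\<in>M. R (fst p) (snd p)" and i1: "inj_on fst M"
    and i2: "inj_on snd M" using MPM PM_def by auto
  have finM: "finite M" using Msub fK1 fK2 by (meson finite_SigmaI finite_subset)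
  have sm: "card M < m"
  proof (rule ccontr)
    assume "\<not> card M < m"
    then obtain M0 where M0: "M0 \<subseteq> M" "card M0 = m" by (meson not_less obtain_subset_with_card_n)
    have "connected_k_matching V R (card M0) ((\<lambda>p. {fst p, snd p}) ` M0)"
      apply (rule pm_matching[OF k])
      using M0(1) Msub Mr inj_on_subset[OF i1 M0(1)] inj_on_subset[OF i2 M0(1)]
      unfolding K1_def K2_def K_def by auto
    then show False using nomatch M0(2) by auto
  qed
  define U where "U = K1 - fst ` M"
  define W where "W = K2 - snd ` M"
  define M1 where "M1 = {p\<in>M. \<exists>u\<in>U. R u (snd p)}"
  define X where "X = fst ` M1"
  define Y where "Y = snd ` (M - M1)"
  have fM: "fst ` M \<subseteq> K1" and sM: "snd ` M \<subseteq> K2" using Msub by auto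
  have cfM: "card (fst ` M) = card M" by (rule card_image[OF i1])
  have csM: "card (snd ` M) = card M" by (rule card_image[OF i2])
  have cU: "card K1 \<le> card U + card M"
    unfolding U_def using card_Diff_subset[OF finite_imageI[OF finM] fM] cfM card_mono[OF fK1 fM] by simp
  have cW: "card K2 \<le> card W + card M"
    unfolding W_def using card_Diff_subset[OF finite_imageI[OF finM] sM] csM card_mono[OF fK2 sM] by simp
  have M1M: "M1 \<subseteq> M" unfolding M1_def by blast
  have cX: "card X = card M1" unfolding X_def by (rule card_image[OF inj_on_subset[OF i1 M1M]])
  have cY: "card Y = card (M - M1)" unfolding Y_def by (rule card_image) (rule inj_on_subset[OF i2], blast)
  have cXY: "card M \<le> card X + card Y"
    using cX cY card_Diff_subset[OF finite_subset[OF M1M finM] M1M] card_mono[OF finM M1M] by simp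
  have UW: "\<forall>u\<in>U. \<forall>w\<in>W. \<not> R u w"
  proof (intro ballI notI)
    fix u w assume u: "u \<in> U" and w: "w \<in> W" and r: "R u w"
    have un: "u \<notin> fst ` M" and wn: "w \<notin> snd ` M" and uK: "u \<in> K1" and wK: "w \<in> K2"
      using u w unfolding U_def W_def by auto
    have "inj_on fst (insert (u,w) M)" by (rule inj_ins[OF i1]) (simp add: un)
    moreover have "inj_on snd (insert (u,w) M)" by (rule inj_ins[OF i2]) (simp add: wn)
    moreover have "insert (u,w) M \<subseteq> K1 \<times> K2" using Msub uK wK by blast
    moreover have "\<forall>p\<in>insert (u,w) M. R (fst p) (snd p)" using Mr r by simp
    ultimately have "insert (u,w) M \<in> PM" unfolding PM_def by blast
    moreover have "(u,w) \<notin> M" using un by (metis fst_conv image_eqI)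
    then have "card (insert (u,w) M) = Suc (card M)" using finM by simp
    ultimately show False using Mmax by fastforce
  qed
  have UY: "\<forall>u\<in>U. \<forall>y\<in>Y. \<not> R u y" unfolding Y_def M1_def by auto
  have XW: "\<forall>x\<in>X. \<forall>w\<in>W. \<not> R x w"
  proof (intro ballI notI)
    fix x w assume x: "x \<in> X" and w: "w \<in> W" and r: "R x w"
    obtain y where p: "(x,y) \<in> M1" using x unfolding X_def by auto
    then obtain u where u: "u \<in> U" "R u y" unfolding M1_def by auto
    have pM: "(x,y) \<in> M" using p M1M by blast
    have un: "u \<notin> fst ` M" using u unfolding U_def by blast
    have wn: "w \<notin> snd ` M" using w unfolding W_def by blast
    note A = aug2[OF i1 i2 pM un wn finM]
    have uK: "u \<in> K1" and wK: "w \<in> K2" using u w unfolding U_def W_def by auto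
    have yK: "y \<in> K2" and xK: "x \<in> K1" using Msub pM by auto
    have s1: "insert (u,y) (insert (x,w) (M - {(x,y)})) \<subseteq> K1 \<times> K2" using Msub uK wK xK yK by blast
    have s2: "\<forall>p\<in>insert (u,y) (insert (x,w) (M - {(x,y)})). R (fst p) (snd p)" using Mr u(2) r by simp
    have "insert (u,y) (insert (x,w) (M - {(x,y)})) \<in> PM"
      unfolding PM_def using A(1,2) s1 s2 by blast
    then show False using Mmax A(3) by fastforce
  qed
  have s1: "U \<subseteq> K \<inter> V1" "W \<subseteq> K \<inter> V2" unfolding U_def W_def K1_def K2_def by auto
  have s2: "X \<subseteq> K \<inter> V1" using fM M1M unfolding X_def K1_def by blast
  have s3: "Y \<subseteq> K \<inter> V2" using sM unfolding Y_def K2_def by blast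
  have s4: "U \<inter> X = {}" using M1M unfolding U_def X_def by blast
  have s5: "W \<inter> Y = {}" unfolding W_def Y_def by blast
  show ?thesis
    apply (rule exI[of _ "card M"], rule exI[of _ U], rule exI[of _ X], rule exI[of _ W], rule exI[of _ Y])
    using sm cU cW cXY UW UY XW s1 s2 s3 s4 s5 unfolding K1_def K2_def by blast
qed

end

context bsetup begin

lemma notK_rc:
  assumes "x \<in> V" "\<not> rc k x" "rc k y" shows "\<not> R y x"
proof
  assume "R y x"
  then have "rc y x" by (rule red_rc)
  then show False using assms(2,3) rc_trans by blast
qed

lemma caseB_half:
  assumes k: "k \<in> V"
  defines "K \<equiv> {y\<in>V. rc k y}"
  assumes A: "A \<subseteq> K \<inter> V1" and W: "W \<subseteq> K \<inter> V2" and Wne: "W \<noteq> {}"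
    and noR: "\<forall>a\<in>A. \<forall>w\<in>W. \<not> R a w"
    and big: "N + n \<le> 2 * card (A \<union> (V1 - K))"
    and Wn: "n \<le> card (W \<union> (V2 - K))"
    and Ka: "N \<le> 2 * card (K \<inter> V1)"
    and O1: "card (V1 - K) < n"
  shows "good V V1 V2 E R n"
proof -
  define Q where "Q = A \<union> (V1 - K)"
  have QV1: "Q \<subseteq> V1" using A Q_def by blast
  have finQ: "finite Q" using QV1 fin1 finite_subset by blast
  obtain w0 where w0: "w0 \<in> W" using Wne by blast
  have w0V2: "w0 \<in> V2" and w0V: "w0 \<in> V" and w0K: "rc k w0" using w0 W VU K_def by auto
  define D where "D = {y\<in>V. bc w0 y}"
  have Qb: "\<And>w q. w \<in> W \<Longrightarrow> q \<in> Q \<Longrightarrow> E w q \<Longrightarrow> bc w q"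
  proof -
    fix w q assume w: "w \<in> W" and q: "q \<in> Q" and e: "E w q"
    have "\<not> R w q"
    proof (cases "q \<in> A")
      case True
      then show ?thesis using noR w Rsym by blast
    next
      case False
      then have "q \<in> V" "\<not> rc k q" using q Q_def K_def VU by auto
      moreover have "rc k w" using w W K_def by auto
      ultimately show ?thesis using notK_rc by blast
    qed
    then show "bc w q" using e blue_bc by blast
  qed
  have sub1: "Q \<inter> nb w0 \<subseteq> D \<inter> V1"
    using Qb[OF w0] QV1 D_def by auto
  have F: "4 * card Q < 4 * card (Q \<inter> nb w0) + N" using sw.F1[OF w0V2 QV1] .
  have cQ: "card (Q \<inter> nb w0) \<le> card (D \<inter> V1)"
    using sub1 fin1 by (intro card_mono) auto
  have c1': "n \<le> card (D \<inter> V1)"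
    using F cQ big twon unfolding Q_def by linarith
  have Wsub: "W \<subseteq> D"
  proof
    fix w1 assume w1: "w1 \<in> W"
    have w1V2: "w1 \<in> V2" using w1 W by blast
    have "2 * card Q < 2 * card (Q \<inter> nb w0 \<inter> nb w1) + N" using sw.F2[OF w0V2 w1V2 QV1] .
    then have "Q \<inter> nb w0 \<inter> nb w1 \<noteq> {}" using big unfolding Q_def by auto
    then obtain q where q: "q \<in> Q" "E w0 q" "E w1 q" by blast
    have "bc w0 q" "bc w1 q" using Qb q w0 w1 by blast+
    then have "bc w0 w1" using bc_sym bc_trans by blast
    then show "w1 \<in> D" using D_def w1V2 VU by blast
  qed
  have claim: "V2 - K \<subseteq> D" if ex: "\<exists>x\<in>D \<inter> K \<inter> V1. \<exists>yo\<in>V2 - K. E x yo"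
  proof -
    obtain x yo where x: "x \<in> D \<inter> K \<inter> V1" and yo: "yo \<in> V2 - K" and e: "E x yo" using ex by blast
    have yoV: "yo \<in> V" "\<not> rc k yo" using yo VU K_def by auto
    have "rc k x" using x K_def by blast
    then have "\<not> R x yo" using notK_rc yoV by blast
    then have "bc x yo" using e blue_bc by blast
    moreover have "bc w0 x" using x D_def by blast
    ultimately have bo: "bc w0 yo" using bc_trans by blast
    show ?thesis
    proof
      fix yp assume yp: "yp \<in> V2 - K"
      have ypV: "yp \<in> V" "\<not> rc k yp" using yp VU K_def by auto
      have KV1: "K \<inter> V1 \<subseteq> V1" by blast
      have "2 * card (K \<inter> V1) < 2 * card (K \<inter> V1 \<inter> nb yo \<inter> nb yp) + N"
        using sw.F2[of yo yp "K \<inter> V1"] yo yp by blast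
      then have "K \<inter> V1 \<inter> nb yo \<inter> nb yp \<noteq> {}" using Ka by auto
      then obtain z where z: "z \<in> K" "E yo z" "E yp z" by blast
      have "rc k z" using z K_def by blast
      then have "\<not> R z yo" "\<not> R z yp" using notK_rc yoV ypV by blast+
      then have "bc z yo" "bc z yp" using z Esym blue_bc by blast+
      then have "bc yo yp" using bc_sym bc_trans by blast
      then have "bc w0 yp" using bo bc_trans by blast
      then show "yp \<in> D" using D_def ypV by blast
    qed
  qed
  show ?thesis
  proof (cases "V2 - K \<subseteq> D")
    case True
    then have "W \<union> (V2 - K) \<subseteq> D \<inter> V2" using Wsub W by blast
    then have "card (W \<union> (V2 - K)) \<le> card (D \<inter> V2)" using fin2 by (intro card_mono) auto
    then have "n \<le> card (D \<inter> V2)" using Wn by linarith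
    then show ?thesis unfolding good_def using w0V c1' D_def by blast
  next
    case False
    then obtain yo where yo: "yo \<in> V2 - K" by blast
    have noE: "\<forall>x\<in>D \<inter> K \<inter> V1. \<not> E x yo" using claim False yo by blast
    have yoV2: "yo \<in> V2" using yo by blast
    have "D \<inter> K \<inter> V1 \<subseteq> V1 - nb yo" using noE Esym by blast
    then have "card (D \<inter> K \<inter> V1) \<le> card (V1 - nb yo)" using fin1 by (intro card_mono) auto
    also have "card (V1 - nb yo) = N - card (nb yo)"
      using card_Diff_subset[OF finite_subset[OF sw.nb_sub[OF yoV2] fin1] sw.nb_sub[OF yoV2]] c1 by simp
    finally have DK: "4 * card (D \<inter> K \<inter> V1) < N" using sw.nb_card[OF yoV2] sw.nb_le[OF yoV2] by linarith
    have DO: "D \<inter> (V1 - K) \<noteq> {}"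
    proof
      assume em: "D \<inter> (V1 - K) = {}"
      have "Q \<inter> nb w0 \<subseteq> D \<inter> K \<inter> V1" using sub1 em QV1 by blast
      then have "card (Q \<inter> nb w0) \<le> card (D \<inter> K \<inter> V1)" using fin1 by (intro card_mono) auto
      then show False using F DK big twon unfolding Q_def by linarith
    qed
    then obtain xo where xo: "xo \<in> D" "xo \<in> V1" "xo \<notin> K" by blast
    have AV1: "A \<subseteq> V1" using A by blast
    have FA: "4 * card A < 4 * card (A \<inter> nb w0) + N" using sw.F1[OF w0V2 AV1] .
    have disjAO: "A \<inter> (V1 - K) = {}" using A by blast
    have finA: "finite A" using AV1 fin1 finite_subset by blast
    have finO: "finite (V1 - K)" using fin1 by blast
    have "card Q = card A + card (V1 - K)" unfolding Q_def using card_Un_disjoint[OF finA finO disjAO] .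
    then have "A \<inter> nb w0 \<noteq> {}" using FA big O1 twon unfolding Q_def by auto
    then obtain x1 where x1: "x1 \<in> A" "E w0 x1" by blast
    have x1D: "bc w0 x1" using Qb[OF w0] x1 Q_def by blast
    have x1K: "rc k x1" "x1 \<in> V1" using x1 A K_def by auto
    have o1V: "xo \<in> V" "\<not> rc k xo" using xo K_def VU by auto
    have "\<not> rc x1 xo" using x1K o1V rc_trans by blast
    moreover have "bc w0 xo" using xo D_def by blast
    ultimately have "N < 2 * card ({y\<in>V. bc w0 y} \<inter> V2)"
      using LemX[of x1 xo w0] x1K xo x1D by blast
    then have "n \<le> card (D \<inter> V2)" unfolding D_def using twon by linarith
    then show ?thesis unfolding good_def using w0V c1' D_def by blast
  qed
qed

end

context bsetup begin

lemma card_split1: "card (V1 - K) + card (K \<inter> V1) = N"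
proof -
  have "(V1 - K) \<union> (K \<inter> V1) = V1" by blast
  moreover have "(V1 - K) \<inter> (K \<inter> V1) = {}" by blast
  ultimately show ?thesis using card_Un_disjoint[of "V1 - K" "K \<inter> V1"] fin1 c1 by auto
qed

lemma card_split2: "card (V2 - K) + card (K \<inter> V2) = N"
proof -
  have "(V2 - K) \<union> (K \<inter> V2) = V2" by blast
  moreover have "(V2 - K) \<inter> (K \<inter> V2) = {}" by blast
  ultimately show ?thesis using card_Un_disjoint[of "V2 - K" "K \<inter> V2"] fin2 c2 by auto
qed

lemma card_un3:
  assumes "finite A" "finite B" "finite C" "A \<inter> B = {}" "A \<inter> C = {}" "B \<inter> C = {}"
  shows "card (A \<union> B \<union> C) = card A + card B + card C"
proof -
  have "card (A \<union> B) = card A + card B" using assms card_Un_disjoint by blast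
  moreover have "(A \<union> B) \<inter> C = {}" using assms by blast
  ultimately show ?thesis using assms card_Un_disjoint[of "A \<union> B" C] by simp
qed

lemma caseB:
  assumes k: "k \<in> V"
  defines "K \<equiv> {y\<in>V. rc k y}"
  assumes a: "m \<le> card (K \<inter> V1)" and b: "m \<le> card (K \<inter> V2)"
  shows "good V V1 V2 E R n"
proof -
  obtain s U X W Y where s: "s < m" and U: "U \<subseteq> K \<inter> V1" and X: "X \<subseteq> K \<inter> V1" and UX: "U \<inter> X = {}"
    and W: "W \<subseteq> K \<inter> V2" and Y: "Y \<subseteq> K \<inter> V2" and WY: "W \<inter> Y = {}"
    and cU: "card (K \<inter> V1) \<le> card U + s" and cW: "card (K \<inter> V2) \<le> card W + s"
    and cXY: "s \<le> card X + card Y"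
    and UW: "\<forall>u\<in>U. \<forall>w\<in>W. \<not> R u w" and UY: "\<forall>u\<in>U. \<forall>y\<in>Y. \<not> R u y"
    and XW: "\<forall>x\<in>X. \<forall>w\<in>W. \<not> R x w"
    using ore_data[OF k, folded K_def] by (elim exE conjE) (rule that; assumption)
  have fU: "finite U" using U fin1 finite_subset by blast
  have fX: "finite X" using X fin1 finite_subset by blast
  have fW: "finite W" using W fin2 finite_subset by blast
  have fY: "finite Y" using Y fin2 finite_subset by blast
  have fO1: "finite (V1 - K)" using fin1 by blast
  have fO2: "finite (V2 - K)" using fin2 by blast
  have e1: "card (V1 - K) + card (K \<inter> V1) = N" by (rule card_split1)
  have e2: "card (V2 - K) + card (K \<inter> V2) = N" by (rule card_split2)
  have u1: "card (U \<union> X \<union> (V1 - K)) = card U + card X + card (V1 - K)"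
    using U X UX by (intro card_un3 fU fX fO1) auto
  have u2: "card (W \<union> Y \<union> (V2 - K)) = card W + card Y + card (V2 - K)"
    using W Y WY by (intro card_un3 fW fY fO2) auto
  have u3: "card (U \<union> (V1 - K)) = card U + card (V1 - K)"
    using U by (intro card_Un_disjoint fU fO1) auto
  have u4: "card (W \<union> (V2 - K)) = card W + card (V2 - K)"
    using W by (intro card_Un_disjoint fW fO2) auto
  have Wne: "W \<noteq> {}"
  proof
    assume "W = {}" then show False using cW b s by simp
  qed
  have Une: "U \<noteq> {}"
  proof
    assume "U = {}" then show False using cU a s by simp
  qed
  have h6: "n \<le> card (W \<union> (V2 - K))" using u4 e2 cW s nm by linarith
  have h6': "n \<le> card (U \<union> (V1 - K))" using u3 e1 cU s nm by linarith
  have h7: "N \<le> 2 * card (K \<inter> V1)" using a nm by linarith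
  have h7': "N \<le> 2 * card (K \<inter> V2)" using b nm by linarith
  have h8: "card (V1 - K) < n" using e1 a nm by linarith
  have h8': "card (V2 - K) < n" using e2 b nm by linarith
  show ?thesis
  proof (cases "N + n \<le> 2 * card (U \<union> X \<union> (V1 - K))")
    case True
    have h1: "U \<union> X \<subseteq> K \<inter> V1" using U X by blast
    have h4: "\<forall>a\<in>U \<union> X. \<forall>w\<in>W. \<not> R a w" using UW XW by blast
    show ?thesis using h1 W Wne h4 True h6 h7 h8 by (rule caseB_half[OF k, of "U \<union> X" W, folded K_def])
  next
    case False
    then have T: "N + n \<le> 2 * card (W \<union> Y \<union> (V2 - K))" using u1 u2 e1 e2 cU cW cXY s nm by linarith
    have h1: "W \<union> Y \<subseteq> K \<inter> V2" using W Y by blast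
    have h4: "\<forall>a\<in>W \<union> Y. \<forall>w\<in>U. \<not> R a w" using UW UY Rsym by blast
    have "good V V2 V1 E R n"
      using h1 U Une h4 T h6' h7' h8' by (rule sw.caseB_half[OF k, of "W \<union> Y" U, folded K_def])
    then show ?thesis by (simp add: good_swap)
  qed
qed

lemma stepA:
  assumes k: "k \<in> V"
  defines "K \<equiv> {y\<in>V. rc k y}"
  assumes a: "n \<le> card (K \<inter> V1)"
  shows "good V V1 V2 E R n"
proof -
  have e1: "card (V1 - K) + card (K \<inter> V1) = N" by (rule card_split1)
  have e2: "card (V2 - K) + card (K \<inter> V2) = N" by (rule card_split2)
  have noRK: "\<And>x y. x \<in> K \<Longrightarrow> y \<in> V \<Longrightarrow> y \<notin> K \<Longrightarrow> \<not> R x y"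
    using notK_rc K_def by blast
  have nr1: "\<forall>x\<in>K \<inter> V1. \<forall>y\<in>V2 - K. E x y \<longrightarrow> \<not> R x y" using noRK VU by blast
  have nr2: "\<forall>x\<in>K \<inter> V2. \<forall>y\<in>V1 - K. E x y \<longrightarrow> \<not> R x y" using noRK VU by blast
  have nr3: "\<forall>x\<in>V2 - K. \<forall>y\<in>K \<inter> V1. E x y \<longrightarrow> \<not> R x y" using noRK VU Rsym by blast
  show ?thesis
  proof (cases "m \<le> card (K \<inter> V1) \<and> m \<le> card (K \<inter> V2)")
    case True
    then have "m \<le> card (K \<inter> V1)" "m \<le> card (K \<inter> V2)" by auto
    then show ?thesis by (rule caseB[OF k, folded K_def])
  next
    case nb: False
    show ?thesis
    proof (cases "N \<le> 2 * card (K \<inter> V2) \<and> card (K \<inter> V1) < m")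
      case True
      have "good V V2 V1 E R n"
        apply (rule sw.BL[of "K \<inter> V2" "V1 - K"])
        subgoal by blast
        subgoal by blast
        subgoal using nr2 by blast
        subgoal using True by linarith
        subgoal using True e1 nm by linarith
        done
      then show ?thesis by (simp add: good_swap)
    next
      case F2: False
      show ?thesis
      proof (cases "2 * card (K \<inter> V2) \<le> N")
        case True
        have "good V V2 V1 E R n"
          apply (rule sw.BL[of "V2 - K" "K \<inter> V1"])
          subgoal by blast
          subgoal by blast
          subgoal using nr3 by blast
          subgoal using True e2 by linarith
          subgoal using a by linarith
          done
        then show ?thesis by (simp add: good_swap)
      next
        case False
        then have "m \<le> card (K \<inter> V1)" "card (K \<inter> V2) < m" using nb F2 by auto
        then show ?thesis
          apply (intro BL[of "K \<inter> V1" "V2 - K"])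
          subgoal by blast
          subgoal by blast
          subgoal using nr1 by blast
          subgoal using nm by linarith
          subgoal using e2 nm by linarith
          done
      qed
    qed
  qed
qed

end

context bsetup begin

lemma caseS:
  assumes small: "\<forall>k\<in>V. card ({y\<in>V. rc k y} \<inter> V1) < n \<and> card ({y\<in>V. rc k y} \<inter> V2) < n"
  shows "good V V1 V2 E R n"
proof (cases "\<exists>x\<in>V. \<exists>w\<in>V2. \<exists>w'\<in>V2. bc x w \<and> bc x w' \<and> \<not> rc w w'")
  case True
  then obtain x w w' where x: "x \<in> V" and w: "w \<in> V2" "w' \<in> V2" and b: "bc x w" "bc x w'"
    and nr: "\<not> rc w w'" by blast
  define D where "D = {y\<in>V. bc x y}"
  have c1': "N < 2 * card (D \<inter> V1)" using sw.LemX[OF w b nr] D_def by simp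
  then have "D \<inter> V1 \<noteq> {}" by auto
  then obtain v0 where v0: "v0 \<in> D" "v0 \<in> V1" by blast
  have v0V: "v0 \<in> V" using v0 VU by blast
  have "\<exists>v\<in>D \<inter> V1. \<not> rc v0 v"
  proof (rule ccontr)
    assume "\<not> (\<exists>v\<in>D \<inter> V1. \<not> rc v0 v)"
    then have "D \<inter> V1 \<subseteq> {y\<in>V. rc v0 y} \<inter> V1" using D_def by blast
    then have "card (D \<inter> V1) \<le> card ({y\<in>V. rc v0 y} \<inter> V1)" using fin1 by (intro card_mono) auto
    moreover have "card ({y\<in>V. rc v0 y} \<inter> V1) < n" using small v0V by blast
    ultimately show False using c1' twon by linarith
  qed
  then obtain v where v: "v \<in> D" "v \<in> V1" "\<not> rc v0 v" by blast
  have "N < 2 * card ({y\<in>V. bc x y} \<inter> V2)"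
    using LemX[of v0 v x] v0 v D_def by blast
  then have c2': "n \<le> card (D \<inter> V2)" unfolding D_def using twon by linarith
  have "n \<le> card (D \<inter> V1)" using c1' twon by linarith
  then show ?thesis unfolding good_def using x c2' D_def by blast
next
  case False
  then have H: "\<And>x w w'. x \<in> V \<Longrightarrow> w \<in> V2 \<Longrightarrow> w' \<in> V2 \<Longrightarrow> bc x w \<Longrightarrow> bc x w' \<Longrightarrow> rc w w'"
    by blast
  have key: "\<exists>w\<in>V2. \<not> rc u w \<and> (\<forall>z\<in>nb u. rc u z \<or> rc w z)" if u: "u \<in> V1" for u
  proof -
    have uV: "u \<in> V" using u VU by blast
    have "\<not> nb u \<subseteq> {y\<in>V. rc u y} \<inter> V2"
    proof
      assume "nb u \<subseteq> {y\<in>V. rc u y} \<inter> V2"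
      then have "card (nb u) \<le> card ({y\<in>V. rc u y} \<inter> V2)" using fin2 by (intro card_mono) auto
      moreover have "card ({y\<in>V. rc u y} \<inter> V2) < n" using small uV by blast
      ultimately show False using nb_card[OF u] twon by linarith
    qed
    then obtain w where w: "w \<in> nb u" "\<not> rc u w" using nb_sub[OF u] by blast
    have wV2: "w \<in> V2" using w nb_sub[OF u] by blast
    have "\<not> R u w" using w red_rc by blast
    then have buw: "bc u w" using w blue_bc by blast
    have "\<forall>z\<in>nb u. rc u z \<or> rc w z"
    proof
      fix z assume z: "z \<in> nb u"
      show "rc u z \<or> rc w z"
      proof (cases "R u z")
        case True then show ?thesis using red_rc by blast
      next
        case False
        then have "bc u z" using z blue_bc by blast
        moreover have "z \<in> V2" using z nb_sub[OF u] by blast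
        ultimately show ?thesis using H[OF uV wV2 _ buw] by blast
      qed
    qed
    then show ?thesis using wV2 w by blast
  qed
  have "V1 \<noteq> {}" using c1 twon npos by auto
  then obtain u where u: "u \<in> V1" by blast
  obtain w where w: "w \<in> V2" "\<not> rc u w" and wz: "\<forall>z\<in>nb u. rc u z \<or> rc w z" using key[OF u] by blast
  have uV: "u \<in> V" and wV: "w \<in> V" using u w VU by auto
  have "\<not> V1 \<subseteq> ({y\<in>V. rc u y} \<inter> V1) \<union> ({y\<in>V. rc w y} \<inter> V1)"
  proof
    assume "V1 \<subseteq> ({y\<in>V. rc u y} \<inter> V1) \<union> ({y\<in>V. rc w y} \<inter> V1)"
    then have "card V1 \<le> card (({y\<in>V. rc u y} \<inter> V1) \<union> ({y\<in>V. rc w y} \<inter> V1))"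
      using fin1 by (intro card_mono) auto
    also have "\<dots> \<le> card ({y\<in>V. rc u y} \<inter> V1) + card ({y\<in>V. rc w y} \<inter> V1)" by (rule card_Un_le)
    finally have "card V1 \<le> card ({y\<in>V. rc u y} \<inter> V1) + card ({y\<in>V. rc w y} \<inter> V1)" .
    moreover have "card ({y\<in>V. rc u y} \<inter> V1) < n" "card ({y\<in>V. rc w y} \<inter> V1) < n"
      using small uV wV by blast+
    ultimately show False using c1 twon by linarith
  qed
  then obtain v where v: "v \<in> V1" "\<not> rc u v" "\<not> rc w v" using VU by blast
  obtain w' where w': "w' \<in> V2" "\<not> rc v w'" and wz': "\<forall>z\<in>nb v. rc v z \<or> rc w' z" using key[OF v(1)] by blast
  have w'V: "w' \<in> V" using w' VU by blast
  have sub: "V2 \<inter> nb u \<inter> nb v \<subseteq> {y\<in>V. rc w' y} \<inter> V2"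
  proof
    fix z assume z: "z \<in> V2 \<inter> nb u \<inter> nb v"
    have "rc w' z"
    proof (cases "rc v z")
      case True
      have "rc u z \<or> rc w z" using wz z by blast
      then show ?thesis using True v rc_sym rc_trans by blast
    next
      case False
      then show ?thesis using wz' z by blast
    qed
    then show "z \<in> {y\<in>V. rc w' y} \<inter> V2" using z by blast
  qed
  have "2 * card V2 < 2 * card (V2 \<inter> nb u \<inter> nb v) + N" using F2[OF u v(1)] by simp
  moreover have "card (V2 \<inter> nb u \<inter> nb v) \<le> card ({y\<in>V. rc w' y} \<inter> V2)"
    using sub fin2 by (intro card_mono) auto
  moreover have "card ({y\<in>V. rc w' y} \<inter> V2) < n" using small w'V by blast
  ultimately show ?thesis using c2 twon by linarith
qed

end

context bsetup begin

lemma main: "good V V1 V2 E R n"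
proof (cases "\<exists>k\<in>V. n \<le> card ({y\<in>V. rc k y} \<inter> V1)")
  case True
  then obtain k where "k \<in> V" "n \<le> card ({y\<in>V. rc k y} \<inter> V1)" by blast
  then show ?thesis by (rule stepA)
next
  case F1: False
  show ?thesis
  proof (cases "\<exists>k\<in>V. n \<le> card ({y\<in>V. rc k y} \<inter> V2)")
    case True
    then obtain k where "k \<in> V" "n \<le> card ({y\<in>V. rc k y} \<inter> V2)" by blast
    then have "good V V2 V1 E R n" by (rule sw.stepA)
    then show ?thesis by (simp add: good_swap)
  next
    case False
    then show ?thesis using F1 caseS by (meson not_le)
  qed
qed

end

theorem lemma3p1:
  fixes V1 V2 :: "'a set" and E R :: "'a \<Rightarrow> 'a \<Rightarrow> bool" and m n :: nat
  assumes "0 < n" and "n < m"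
    and "balanced_bipartite_graph V1 V2 E"
    and "card V1 = m + n - 1" and "card V2 = m + n - 1"
    and "\<forall>u\<in>V1 \<union> V2. real (degree (V1 \<union> V2) E u) > 3 / 4 * real (m + n - 1)"
    and "red_blue_coloring E R"
    and "\<not> (\<exists>M. connected_k_matching (V1 \<union> V2) R m M)"
  shows "\<exists>C. is_component (V1 \<union> V2) (blue_edges E R) C \<and>
           card (C \<inter> V1) \<ge> n \<and> card (C \<inter> V2) \<ge> n"
proof -
  have bb: "finite V1" "finite V2" "V1 \<inter> V2 = {}" "\<And>u v. E u v \<Longrightarrow> E v u"
    "\<And>u v. E u v \<Longrightarrow> (u \<in> V1 \<and> v \<in> V2) \<or> (u \<in> V2 \<and> v \<in> V1)"
    using assms(3) unfolding balanced_bipartite_graph_def by blast+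
  have rb: "\<And>u v. R u v \<Longrightarrow> E u v" "\<And>u v. R u v \<Longrightarrow> R v u"
    using assms(7) unfolding red_blue_coloring_def by blast+
  have dg: "\<And>u. u \<in> V1 \<union> V2 \<Longrightarrow> 3 * (m + n - 1) < 4 * card {v \<in> V1 \<union> V2. E u v}"
  proof -
    fix u assume u: "u \<in> V1 \<union> V2"
    have h: "3 / 4 * real (m + n - 1) < real (card {v \<in> V1 \<union> V2. E u v})"
      using assms(6) u unfolding degree_def by blast
    then have "real (3 * (m + n - 1)) < real (4 * card {v \<in> V1 \<union> V2. E u v})"
      by simp
    then show "3 * (m + n - 1) < 4 * card {v \<in> V1 \<union> V2. E u v}" by (rule of_nat_less_imp_less)
  qed
  interpret bsetup "V1 \<union> V2" V1 V2 E R m n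
    by (unfold_locales) (use bb rb dg assms(1,2,4,5,8) in auto)
  have "good (V1 \<union> V2) V1 V2 E R n" by (rule main)
  then obtain x where x: "x \<in> V1 \<union> V2"
    and c: "n \<le> card ({y\<in>V1 \<union> V2. conn (V1 \<union> V2) (blue_edges E R) x y} \<inter> V1)"
      "n \<le> card ({y\<in>V1 \<union> V2. conn (V1 \<union> V2) (blue_edges E R) x y} \<inter> V2)"
    unfolding good_def by blast
  have "is_component (V1 \<union> V2) (blue_edges E R) {y\<in>V1 \<union> V2. conn (V1 \<union> V2) (blue_edges E R) x y}"
    unfolding is_component_def conn_def by (rule bexI[OF refl x])
  then show ?thesis using c by blast
qed

end
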